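(* Let $L>0$, $\delta_t>0$, integer $n\ge1$, and $p=\frac1n$. The cubic equation in $\alpha$ $$\Big(1-\frac{p(\alpha+\delta_t)}{\alpha+L+\delta_t}\Big)\Big(1+\frac{\delta_t}{\alpha}\Big)^2=1$$ has a unique positive root $\alpha$. With this $\alpha$, set $\tau_x=\frac{\alpha+\delta_t}{\alpha+L+\delta_t}$, $\tau_z=\frac{\tau_x}{\delta_t}-\frac{\alpha(1-\tau_x)}{\delta_tL}$, $C_{\rm IDC}=L^2+\frac{L\alpha^2p}{L+(1-p)(\alpha+\delta_t)}$ and $C_{\rm IFC}=2L+\frac{2L\alpha^2p}{(L+(1-p)(\alpha+\delta_t))\delta_t}$. Then $\frac{\alpha}{\delta_t}=O\big(n+\sqrt{n(L/\delta_t+1)}\big)$, $C_{\rm IDC}=O((L+\delta_t)^2)$ and $C_{\rm IFC}=O(L)$.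
   Context: These are the parameters used in the inner loop of the adaptively regularized accelerated SVRG method (R-Acc-SVRG-G) for regularization parameter $\delta_t$. The $O(\cdot)$ hides absolute constants. *)

theory Defs
  imports Complex_Main
begin

definition svrg_p :: "nat \<Rightarrow> real" where
  "svrg_p n = 1 / real n"

definition alpha_eq :: "real \<Rightarrow> real \<Rightarrow> nat \<Rightarrow> real \<Rightarrow> bool" where
  "alpha_eq L \<delta> n \<alpha> \<longleftrightarrow>
     (1 - svrg_p n * (\<alpha> + \<delta>) / (\<alpha> + L + \<delta>)) * (1 + \<delta> / \<alpha>)^2 = 1"

definition tau_x :: "real \<Rightarrow> real \<Rightarrow> real \<Rightarrow> real" where
  "tau_x L \<delta> \<alpha> = (\<alpha> + \<delta>) / (\<alpha> + L + \<delta>)"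

definition tau_z :: "real \<Rightarrow> real \<Rightarrow> real \<Rightarrow> real" where
  "tau_z L \<delta> \<alpha> = tau_x L \<delta> \<alpha> / \<delta> - \<alpha> * (1 - tau_x L \<delta> \<alpha>) / (\<delta> * L)"

definition C_IDC :: "real \<Rightarrow> real \<Rightarrow> nat \<Rightarrow> real \<Rightarrow> real" where
  "C_IDC L \<delta> n \<alpha> = L^2 + L * \<alpha>^2 * svrg_p n / (L + (1 - svrg_p n) * (\<alpha> + \<delta>))"

definition C_IFC :: "real \<Rightarrow> real \<Rightarrow> nat \<Rightarrow> real \<Rightarrow> real" where
  "C_IFC L \<delta> n \<alpha> = 2 * L + 2 * L * \<alpha>^2 * svrg_p n / ((L + (1 - svrg_p n) * (\<alpha> + \<delta>)) * \<delta>)"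

end

theory Submission
  imports Defs
begin

lemma key_eq:
  fixes a d L p :: real
  assumes a: "a > 0" and d: "d > 0" and L: "L > 0" and p: "0 < p" "p \<le> 1"
    and eq: "(1 - p * (a + d) / (a + L + d)) * (1 + d / a)^2 = 1"
  shows "a^2 * p * (a + d) = (L + (1 - p) * (a + d)) * (2*a*d + d^2)"
proof -
  have h1: "1 - p * (a + d) / (a + L + d) = (L + (1 - p) * (a + d)) / (a + L + d)"
    using a d L by (simp add: field_simps)
  have h2: "(1 + d / a)^2 = (a + d)^2 / a^2"
    using a by (simp add: field_simps power2_eq_square)
  have "(L + (1 - p) * (a + d)) * (a + d)^2 = a^2 * (a + L + d)"
    using eq a d L unfolding h1 h2 by (simp add: field_simps)
  then show ?thesis by (simp add: algebra_simps power2_eq_square power3_eq_cube)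
qed

lemma key_eq_rev:
  fixes a d L p :: real
  assumes a: "a > 0" and d: "d > 0" and L: "L > 0"
    and g: "(L + (1 - p) * (a + d)) * (a + d)^2 - a^2 * (a + L + d) = 0"
  shows "(1 - p * (a + d) / (a + L + d)) * (1 + d / a)^2 = 1"
proof -
  have h1: "1 - p * (a + d) / (a + L + d) = (L + (1 - p) * (a + d)) / (a + L + d)"
    using a d L by (simp add: field_simps)
  have h2: "(1 + d / a)^2 = (a + d)^2 / a^2"
    using a by (simp add: field_simps power2_eq_square)
  have pos: "a^2 * (a + L + d) > 0" using a d L by simp
  have "(L + (1 - p) * (a + d)) * (a + d)^2 = a^2 * (a + L + d)" using g by simp
  then have "(L + (1 - p) * (a + d)) * (a + d)^2 / (a^2 * (a + L + d)) = 1" using pos a d L by simp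
  then show ?thesis unfolding h1 h2 using a d L by (simp add: field_simps)
qed

lemma f_mono:
  fixes a b d L p :: real
  assumes a: "a > 0" and ab: "a < b" and d: "d > 0" and L: "L > 0" and p: "0 < p" "p \<le> 1"
  shows "(1 - p * (b + d) / (b + L + d)) * (1 + d / b)^2 < (1 - p * (a + d) / (a + L + d)) * (1 + d / a)^2"
proof -
  have r: "(a + d) / (a + L + d) \<le> (b + d) / (b + L + d)"
    using a ab d L by (simp add: divide_simps) (simp add: algebra_simps mult_right_mono)
  have lt1: "(b + d) / (b + L + d) < 1" using a ab d L by simp
  have Ab: "1 - p * (b + d) / (b + L + d) > 0"
  proof -
    have "p * ((b + d) / (b + L + d)) < 1"
      using lt1 p by (smt (verit) mult_left_le_one_le divide_nonneg_nonneg a ab d L)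
    thus ?thesis by simp
  qed
  have AA: "1 - p * (b + d) / (b + L + d) \<le> 1 - p * (a + d) / (a + L + d)"
    using mult_left_mono[OF r, of p] p by simp
  have B1: "d / b < d / a" using a ab d by (simp add: frac_less2)
  have B: "(1 + d / b)^2 < (1 + d / a)^2"
    using B1 a ab d by (intro power_strict_mono) auto
  have "(1 - p * (b + d) / (b + L + d)) * (1 + d / b)^2 < (1 - p * (b + d) / (b + L + d)) * (1 + d / a)^2"
    using B Ab by simp
  also have "\<dots> \<le> (1 - p * (a + d) / (a + L + d)) * (1 + d / a)^2"
    using AA by (intro mult_right_mono) auto
  finally show ?thesis .
qed

lemma exists_root:
  fixes d L p :: real
  assumes d: "d > 0" and L: "L > 0" and p: "0 < p" "p \<le> 1"
  shows "\<exists>a>0. (1 - p * (a + d) / (a + L + d)) * (1 + d / a)^2 = 1"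
proof -
  define g where "g = (\<lambda>x::real. (L + (1 - p) * (x + d)) * (x + d)^2 - x^2 * (x + L + d))"
  define b where "b = 6 * (L + d) / p"
  have pb: "p * b = 6 * (L + d)" using p unfolding b_def by simp
  have bd: "b \<ge> d"
  proof -
    have "b \<ge> 6 * (L + d)" unfolding b_def using p d L by (simp add: divide_simps mult_left_le)
    thus ?thesis using d L by (simp add: algebra_simps)
  qed
  have "(1 - p) * d \<ge> 0" using p d by simp
  hence "L + (1 - p) * d > 0" using L by linarith
  hence g0: "g 0 > 0" unfolding g_def using d by simp
  have gid: "g b = (L + (1 - p) * (b + d)) * (2*b*d + d^2) - p * b^2 * (b + d)"
    unfolding g_def by (simp add: algebra_simps power2_eq_square power3_eq_cube)
  have Q: "L + (1 - p) * (b + d) \<le> L + b + d"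
    using p bd d by (smt (verit) mult_left_le_one_le)
  have Qn: "L + (1 - p) * (b + d) \<ge> 0" using p bd d L by simp
  have t: "2*b*d + d^2 \<le> 3 * b * d" using bd d by (simp add: power2_eq_square)
  have "(L + (1 - p) * (b + d)) * (2*b*d + d^2) \<le> (L + b + d) * (3 * b * d)"
    using Q Qn t bd d L by (intro mult_mono) auto
  also have "\<dots> \<le> 6 * (L + d) * b * (b + d)"
  proof -
    have "d * (L + b + d) \<le> 2 * ((L + d) * (b + d))" using d L bd
      by (simp add: algebra_simps)
    hence "b * (3 * (d * (L + b + d))) \<le> b * (6 * ((L + d) * (b + d)))" using bd d by (intro mult_left_mono) auto
    thus ?thesis by (simp add: algebra_simps)
  qed
  also have "\<dots> = p * b^2 * (b + d)" using pb by (simp add: power2_eq_square algebra_simps)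
  finally have gb: "g b \<le> 0" using gid by simp
  have cont: "\<forall>x. 0 \<le> x \<and> x \<le> b \<longrightarrow> isCont g x" unfolding g_def by (auto intro!: continuous_intros)
  obtain x where x: "0 \<le> x" "x \<le> b" "g x = 0"
    using IVT2[of g b 0 0, OF gb _ _ cont] g0 bd d by auto
  have "x \<noteq> 0" using x g0 by auto
  hence xp: "x > 0" using x by simp
  show ?thesis
    using key_eq_rev[OF xp d L, of p] x(3) xp unfolding g_def by auto
qed

lemma lin_aux:
  fixes A e Y X Z :: real
  shows "A + e \<le> 3 * Y + 3 * X + 3 * Z \<Longrightarrow> 6 * X \<le> A \<Longrightarrow> 0 \<le> e \<Longrightarrow> A \<le> 6 * Y + 6 * Z"
  by linarith

lemma alpha_bound:
  fixes a d L :: real and n :: nat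
  assumes a: "a > 0" and d: "d > 0" and L: "L > 0" and n: "n \<ge> 1"
    and k: "a^2 * (1 / real n) * (a + d) = (L + (1 - 1 / real n) * (a + d)) * (2*a*d + d^2)"
  shows "a / d \<le> 6 * (real n + sqrt (real n * (L / d + 1)))"
proof -
  have n1: "real n \<ge> 1" using n by simp
  have sq0: "sqrt (real n * (L / d + 1)) \<ge> 0" using d L by simp
  have k2: "a^2 * (a + d) = real n * (L + (1 - 1 / real n) * (a + d)) * (2*a*d + d^2)"
  proof -
    have "a^2 * (a + d) = real n * (a^2 * (1 / real n) * (a + d))" using n1 by simp
    also have "\<dots> = real n * ((L + (1 - 1 / real n) * (a + d)) * (2*a*d + d^2))" using k by simp
    finally show ?thesis by (simp add: mult.assoc)
  qed
  consider "a \<le> d" | "d < a \<and> a \<le> 6 * real n * d" | "a > 6 * real n * d \<and> d < a" by linarith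
  then show ?thesis
  proof cases
    case 1
    hence "a / d \<le> 1" using d by simp
    thus ?thesis using n1 sq0 by (smt (verit))
  next
    case 2
    hence "a / d \<le> 6 * real n" using d by (simp add: divide_simps)
    thus ?thesis using sq0 by (smt (verit))
  next
    case 3
    have ip: "0 \<le> 1 / real n" "1 / real n \<le> 1" using n1 by auto
    have Q1: "(1 - 1 / real n) * (a + d) \<le> a + d"
      using mult_left_le_one_le[of "a + d" "1 - 1 / real n"] ip a d by simp
    have Q: "L + (1 - 1 / real n) * (a + d) \<le> L + a + d" using Q1 by simp
    have Qn: "L + (1 - 1 / real n) * (a + d) \<ge> 0"
      using mult_nonneg_nonneg[of "1 - 1 / real n" "a + d"] ip a d L by simp
    have "d * d \<le> a * d" using 3 d by (intro mult_right_mono) auto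
    hence t: "2*a*d + d^2 \<le> 3 * a * d" by (simp add: power2_eq_square)
    have t0: "0 \<le> 2*a*d + d^2" using a d by simp
    have m1: "(L + (1 - 1 / real n) * (a + d)) * (2*a*d + d^2) \<le> (L + a + d) * (3 * a * d)"
      using Q Qn t t0 by (intro mult_mono) auto
    have "a^2 * (a + d) = real n * ((L + (1 - 1 / real n) * (a + d)) * (2*a*d + d^2))"
      using k2 by (simp only: mult.assoc)
    also have "\<dots> \<le> real n * ((L + a + d) * (3 * a * d))"
      using mult_left_mono[OF m1, of "real n"] n1 by linarith
    finally have "a^2 * (a + d) \<le> real n * ((L + a + d) * (3 * a * d))" .
    hence "a * (a * (a + d)) \<le> a * (3 * real n * d * (L + a + d))"
      by (simp add: power2_eq_square algebra_simps)
    hence h: "a * (a + d) \<le> 3 * real n * d * (L + a + d)" using a by simp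
    have "(6 * real n * d) * a \<le> a * a" using 3 a by (intro mult_right_mono) auto
    hence h2: "3 * real n * d * a * 2 \<le> a * a" by simp
    have h': "a * a + a * d \<le> 3 * real n * d * L + 3 * real n * d * a + 3 * real n * d * d"
      using h by (simp add: algebra_simps)
    have "a * d \<ge> 0" using a d by simp
    hence "a * a \<le> 6 * (real n * d * L) + 6 * (real n * d * d)"
      using h' h2 lin_aux[of "a * a" "a * d" "real n * d * L" "real n * d * a" "real n * d * d"]
      by (simp add: mult.assoc)
    hence "a * a \<le> 6 * real n * d * (L + d)" by (simp add: algebra_simps)
    hence "(a / d)^2 \<le> 6 * (real n * (L / d + 1))" using d
      by (simp add: power2_eq_square divide_simps algebra_simps)
    hence "a / d \<le> sqrt (6 * (real n * (L / d + 1)))" by (rule real_le_rsqrt)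
    also have "\<dots> = sqrt 6 * sqrt (real n * (L / d + 1))" by (simp add: real_sqrt_mult)
    also have "\<dots> \<le> 6 * sqrt (real n * (L / d + 1))"
    proof -
      have "sqrt 6 \<le> sqrt ((6::real)^2)" by (rule real_sqrt_le_mono) simp
      also have "\<dots> = 6" using real_sqrt_abs[of "6::real"] by linarith
      finally have "sqrt 6 \<le> (6::real)" .
      thus ?thesis using sq0 by (intro mult_right_mono) auto
    qed
    finally show ?thesis using n1 by (smt (verit))
  qed
qed

lemma X_bound:
  fixes a d L p :: real
  assumes a: "a > 0" and d: "d > 0" and L: "L > 0" and p: "0 < p" "p \<le> 1"
    and k: "a^2 * p * (a + d) = (L + (1 - p) * (a + d)) * (2*a*d + d^2)"
  shows "0 \<le> a^2 * p / (L + (1 - p) * (a + d))" "a^2 * p / (L + (1 - p) * (a + d)) \<le> 2 * d"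
proof -
  have "(1 - p) * (a + d) \<ge> 0" using p a d by simp
  hence Q: "L + (1 - p) * (a + d) > 0" using L by linarith
  show "0 \<le> a^2 * p / (L + (1 - p) * (a + d))" using Q p by simp
  have "(L + (1 - p) * (a + d)) * (2*a*d + d^2) \<le> (L + (1 - p) * (a + d)) * (2 * d * (a + d))"
    using Q d a by (intro mult_left_mono) (auto simp: algebra_simps power2_eq_square)
  hence "(a^2 * p) * (a + d) \<le> (2 * d * (L + (1 - p) * (a + d))) * (a + d)" using k by (simp add: algebra_simps)
  hence "a^2 * p \<le> 2 * d * (L + (1 - p) * (a + d))" using a d by simp
  thus "a^2 * p / (L + (1 - p) * (a + d)) \<le> 2 * d" using Q by (simp add: divide_simps)
qed

theorem proposition3:
  "\<exists>C>0. \<forall>(L::real) (\<delta>::real) (n::nat). L > 0 \<longrightarrow> \<delta> > 0 \<longrightarrow> n \<ge> 1 \<longrightarrow>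
      (\<exists>!\<alpha>. \<alpha> > 0 \<and> alpha_eq L \<delta> n \<alpha>) \<and>
      (\<forall>\<alpha>. \<alpha> > 0 \<and> alpha_eq L \<delta> n \<alpha> \<longrightarrow>
          \<alpha> / \<delta> \<le> C * (real n + sqrt (real n * (L / \<delta> + 1))) \<and>
          \<bar>C_IDC L \<delta> n \<alpha>\<bar> \<le> C * (L + \<delta>)^2 \<and>
          \<bar>C_IFC L \<delta> n \<alpha>\<bar> \<le> C * L)"
proof (intro exI[of _ 6] conjI allI impI)
  show "(0::real) < 6" by simp
next
  fix L d :: real and n :: nat
  assume L: "L > 0" and d: "d > 0" and n: "n \<ge> 1"
  define p where "p = svrg_p n"
  have p: "0 < p" "p \<le> 1" using n unfolding p_def svrg_p_def by auto
  have ae: "alpha_eq L d n a \<longleftrightarrow> (1 - p * (a + d) / (a + L + d)) * (1 + d / a)^2 = 1" for a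
    unfolding alpha_eq_def p_def ..
  show "\<exists>!\<alpha>. \<alpha> > 0 \<and> alpha_eq L d n \<alpha>"
  proof -
    obtain a where a0: "a > 0" and a1: "(1 - p * (a + d) / (a + L + d)) * (1 + d / a)^2 = 1"
      using exists_root[OF d L p] by blast
    have a: "a > 0" "alpha_eq L d n a" using a0 a1 ae[of a] by auto
    have "b = a" if b: "b > 0" "alpha_eq L d n b" for b
    proof (rule ccontr)
      assume "b \<noteq> a"
      then consider "a < b" | "b < a" by linarith
      thus False
      proof cases
        case 1 show False using f_mono[OF a(1) 1 d L p] a(2) b(2) ae[of a] ae[of b] by simp
      next
        case 2 show False using f_mono[OF b(1) 2 d L p] a(2) b(2) ae[of a] ae[of b] by simp
      qed
    qed
    thus ?thesis using a by blast
  qed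
  fix a assume aa: "a > 0 \<and> alpha_eq L d n a"
  hence a: "a > 0" and eq: "(1 - p * (a + d) / (a + L + d)) * (1 + d / a)^2 = 1" using ae[of a] by auto
  have k: "a^2 * p * (a + d) = (L + (1 - p) * (a + d)) * (2*a*d + d^2)"
    by (rule key_eq[OF a d L p eq])
  have k': "a^2 * (1 / real n) * (a + d) = (L + (1 - 1 / real n) * (a + d)) * (2*a*d + d^2)"
    using k unfolding p_def svrg_p_def .
  show "a / d \<le> 6 * (real n + sqrt (real n * (L / d + 1)))"
    by (rule alpha_bound[OF a d L n k'])
  define X where "X = a^2 * p / (L + (1 - p) * (a + d))"
  have X: "0 \<le> X" "X \<le> 2 * d" using X_bound[OF a d L p k] unfolding X_def by auto
  have CI: "C_IDC L d n a = L^2 + L * X" unfolding C_IDC_def X_def p_def by simp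
  have CF: "C_IFC L d n a = 2 * L + 2 * L * X / d" unfolding C_IFC_def X_def p_def by simp
  have LX: "0 \<le> L * X" "L * X \<le> L * (2 * d)" using X L mult_left_mono[OF X(2), of L] by auto
  have c0: "0 \<le> L^2 + L * X" using LX by simp
  have c1: "L^2 + L * X \<le> L^2 + L * (2 * d)" using LX by linarith
  have c2: "L^2 + L * (2 * d) \<le> 6 * (L + d)^2"
  proof -
    have "0 \<le> L * L" "0 \<le> L * d" "0 \<le> d * d" using L d by auto
    thus ?thesis by (simp add: power2_eq_square algebra_simps)
  qed
  show "\<bar>C_IDC L d n a\<bar> \<le> 6 * (L + d)^2" unfolding CI using c0 c1 c2 by linarith
  have XD: "X / d \<le> 2" using X d by (simp add: divide_le_eq)
  have XD0: "X / d \<ge> 0" using X d by simp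
  have e: "2 * L * X / d = 2 * L * (X / d)" by simp
  have f1: "2 * L * (X / d) \<le> 2 * L * 2" using mult_left_mono[OF XD, of "2 * L"] L by linarith
  have f2: "2 * L * (X / d) \<ge> 0" using mult_nonneg_nonneg[OF _ XD0, of "2 * L"] L by linarith
  show "\<bar>C_IFC L d n a\<bar> \<le> 6 * L" unfolding CF e using f1 f2 L by linarith
qed

end
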